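(* Let $P, Q \subseteq \mathbb{R}^7$ be distinct associative $3$-planes. Then $\Theta(P) \cap \Theta(Q) \subseteq \Lambda^2_7$.
   Context: Equip $\mathbb{R}^7$ with its standard inner product, orientation and basis. Let $\varphi = e_{123} - e_{167} - e_{527} - e_{563} - e_{415} - e_{426} - e_{437}$ ($e_{ijk} = e_i\wedge e_j\wedge e_k$), $\psi = \star\varphi = e_{4567} - e_{4523} - e_{4163} - e_{4127} - e_{2637} - e_{1537} - e_{1526}$, and define $\times$ by $\langle u \times v, w \rangle = \varphi(u,v,w)$. A $3$-dimensional subspace is associative if closed under $\times$. For $u,v$: $u\wedge v$ is the 2-form $(a,b)\mapsto \langle u,a\rangle\langle v,b\rangle - \langle u,b\rangle\langle v,a\rangle$; $u\lrcorner\varphi$ is the 2-form $(a,b)\mapsto \varphi(u,a,b)$; $\Psi_{uv}$ is the 2-form $(a,b)\mapsto\psi(u,v,a,b)$. $\Lambda^2_7 = \{u \lrcorner \varphi : u \in \mathbb{R}^7\}$. For associative $P$, $\Theta(P) = \Lambda^2(P) \oplus \Psi(P)$ where $\Lambda^2(P) = \mathrm{Span}\{u\wedge v: u,v\in P\}$ and $\Psi(P) = \mathrm{Span}\{\Psi_{uv} : u,v\in P\}$. *)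

theory Defs
  imports "HOL-Analysis.Analysis"
begin

text \<open>R^7 is modelled as real^7. The standard basis vector e_i (i = 1..7) is the
  coordinate with index (of_nat i :: 7); the map i \<mapsto> of_nat i is a bijection from
  {1..7} onto the index type 7.\<close>

type_synonym vec7 = "real^7"

definition coord :: "vec7 \<Rightarrow> nat \<Rightarrow> real" where
  "coord x i = x $ (of_nat i :: 7)"

definition std_e :: "nat \<Rightarrow> vec7" where
  "std_e i = axis (of_nat i :: 7) 1"

text \<open>The decomposable form e_{i_1} \<and> ... \<and> e_{i_n} evaluated on vectors v_1..v_n
  (determinant convention).\<close>
definition ewedge :: "nat list \<Rightarrow> vec7 list \<Rightarrow> real" where
  "ewedge is vs = (\<Sum>p | p permutes {..<length is}.
      of_int (sign p) * (\<Prod>r<length is. coord (vs ! r) (is ! p r)))"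

definition phi :: "vec7 \<Rightarrow> vec7 \<Rightarrow> vec7 \<Rightarrow> real" where
  "phi u v w = (let e = (\<lambda>i j k. ewedge [i,j,k] [u,v,w]) in
     e 1 2 3 - e 1 6 7 - e 5 2 7 - e 5 6 3 - e 4 1 5 - e 4 2 6 - e 4 3 7)"

definition psi :: "vec7 \<Rightarrow> vec7 \<Rightarrow> vec7 \<Rightarrow> vec7 \<Rightarrow> real" where
  "psi a b c d = (let e = (\<lambda>i j k l. ewedge [i,j,k,l] [a,b,c,d]) in
     e 4 5 6 7 - e 4 5 2 3 - e 4 1 6 3 - e 4 1 2 7 - e 2 6 3 7 - e 1 5 3 7 - e 1 5 2 6)"

definition cross7 :: "vec7 \<Rightarrow> vec7 \<Rightarrow> vec7" where
  "cross7 u v = (THE z. \<forall>w. inner z w = phi u v w)"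

definition associative :: "vec7 set \<Rightarrow> bool" where
  "associative P \<longleftrightarrow> subspace P \<and> dim P = 3 \<and> (\<forall>u\<in>P. \<forall>v\<in>P. cross7 u v \<in> P)"

text \<open>2-forms on R^7 as (bilinear, alternating) functions of two vectors.\<close>
type_synonym form2 = "vec7 \<Rightarrow> vec7 \<Rightarrow> real"

definition wedge2 :: "vec7 \<Rightarrow> vec7 \<Rightarrow> form2" where
  "wedge2 u v = (\<lambda>a b. inner u a * inner v b - inner u b * inner v a)"

definition contr_phi :: "vec7 \<Rightarrow> form2" where
  "contr_phi u = (\<lambda>a b. phi u a b)"

definition Psi2 :: "vec7 \<Rightarrow> vec7 \<Rightarrow> form2" where
  "Psi2 u v = (\<lambda>a b. psi u v a b)"

definition form_span :: "form2 set \<Rightarrow> form2 set" where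
  "form_span S = {\<omega>. \<exists>F c. finite F \<and> F \<subseteq> S \<and> \<omega> = (\<lambda>a b. \<Sum>f\<in>F. c f * f a b)}"

definition Lambda27 :: "form2 set" where
  "Lambda27 = {contr_phi u | u. True}"

definition Lambda2_of :: "vec7 set \<Rightarrow> form2 set" where
  "Lambda2_of P = form_span {wedge2 u v | u v. u \<in> P \<and> v \<in> P}"

definition Psi_of :: "vec7 set \<Rightarrow> form2 set" where
  "Psi_of P = form_span {Psi2 u v | u v. u \<in> P \<and> v \<in> P}"

text \<open>Theta(P) = Lambda^2(P) \<oplus> Psi(P), as the (internal) sum of subspaces.\<close>
definition Theta :: "vec7 set \<Rightarrow> form2 set" where
  "Theta P = {(\<lambda>a b. x a b + y a b) | x y. x \<in> Lambda2_of P \<and> y \<in> Psi_of P}"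

end

theory Submission
  imports Defs
begin


lemma perm_sum_0: "(\<Sum>p | p permutes {..<0::nat}. f p) = f id"
  by (simp add: permutes_empty)

lemma perm_sum_Suc:
  "(\<Sum>p | p permutes {..<Suc n}. of_int (sign p) * g p) =
   (\<Sum>b\<in>{..n}. \<Sum>q | q permutes {..<n}. of_int (sign q) * ((if b = n then 1 else -1) * (g (Transposition.transpose n b \<circ> q) :: real)))"
proof -
  have "{..<Suc n} = insert n {..<n}" by auto
  then have "(\<Sum>p | p permutes {..<Suc n}. of_int (sign p) * g p) =
     (\<Sum>b\<in>insert n {..<n}. \<Sum>q | q permutes {..<n}. of_int (sign (Transposition.transpose n b \<circ> q)) * g (Transposition.transpose n b \<circ> q))"
    using sum_over_permutations_insert[of "{..<n}" n "\<lambda>p. of_int (sign p) * g p"] by simp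
  also have "insert n {..<n} = {..n}" by auto
  also have "(\<Sum>b\<in>{..n}. \<Sum>q | q permutes {..<n}. of_int (sign (Transposition.transpose n b \<circ> q)) * g (Transposition.transpose n b \<circ> q)) =
     (\<Sum>b\<in>{..n}. \<Sum>q | q permutes {..<n}. of_int (sign q) * ((if b = n then 1 else -1) * g (Transposition.transpose n b \<circ> q)))"
  proof (intro sum.cong refl)
    fix b q assume "q \<in> {q. q permutes {..<n}}"
    then have "permutation q" using permutation_permutes by blast
    then have "sign (Transposition.transpose n b \<circ> q) = sign (Transposition.transpose n b) * sign q"
      by (simp add: sign_compose permutation_swap_id)
    then show "of_int (sign (Transposition.transpose n b \<circ> q)) * g (Transposition.transpose n b \<circ> q) = of_int (sign q) * ((if b = n then 1 else -1) * g (Transposition.transpose n b \<circ> q))"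
      by (auto simp: sign_swap_id)
  qed
  finally show ?thesis .
qed

lemma ewedge3: "ewedge [i,j,k] [u,v,w] =
  coord u i * coord v j * coord w k - coord u i * coord v k * coord w j
 - coord u j * coord v i * coord w k + coord u j * coord v k * coord w i
 + coord u k * coord v i * coord w j - coord u k * coord v j * coord w i"
  unfolding ewedge_def
  apply (simp only: length_Cons list.size numeral_3_eq_3 perm_sum_Suc perm_sum_0 One_nat_def add_0 Suc_eq_plus1[symmetric])
  apply (simp add: atMost_Suc Transposition.transpose_def)
  done

lemma ewedge4: "ewedge [i,j,k,l] [a,b,c,d] = coord a i * coord b j * coord c k * coord d l - coord a i * coord b j * coord c l * coord d k - coord a i * coord b k * coord c j * coord d l + coord a i * coord b k * coord c l * coord d j + coord a i * coord b l * coord c j * coord d k - coord a i * coord b l * coord c k * coord d j - coord a j * coord b i * coord c k * coord d l + coord a j * coord b i * coord c l * coord d k + coord a j * coord b k * coord c i * coord d l - coord a j * coord b k * coord c l * coord d i - coord a j * coord b l * coord c i * coord d k + coord a j * coord b l * coord c k * coord d i + coord a k * coord b i * coord c j * coord d l - coord a k * coord b i * coord c l * coord d j - coord a k * coord b j * coord c i * coord d l + coord a k * coord b j * coord c l * coord d i + coord a k * coord b l * coord c i * coord d j - coord a k * coord b l * coord c j * coord d i - coord a l * coord b i * coord c j * coord d k + coord a l * coord b i * coord c k * coord d j + coord a l * coord b j * coord c i * coord d k - coord a l * coord b j * coord c k * coord d i - coord a l * coord b k * coord c i * coord d j + coord a l * coord b k * coord c j * coord d i"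
  unfolding ewedge_def
  apply (simp only: length_Cons list.size perm_sum_Suc perm_sum_0 One_nat_def add_0 Suc_eq_plus1[symmetric])
  apply (simp add: atMost_Suc Transposition.transpose_def)
  done

lemma exhaust_7:
  fixes x :: 7
  shows "x = 0 \<or> x = 1 \<or> x = 2 \<or> x = 3 \<or> x = 4 \<or> x = 5 \<or> x = 6"
proof (induct x)
  case (of_int z)
  then have "z = 0 \<or> z = 1 \<or> z = 2 \<or> z = 3 \<or> z = 4 \<or> z = 5 \<or> z = 6" by fastforce
  then show ?case by auto
qed

lemma UNIV_7: "(UNIV::7 set) = {0,1,2,3,4,5,6}"
  using exhaust_7 by auto

lemma sum_7: "sum f (UNIV::7 set) = f 0 + f 1 + f 2 + f 3 + f 4 + f 5 + f 6"
  unfolding UNIV_7 by (simp add: ac_simps)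

lemma seven7: "(7::7) = 0" by simp

lemmas coord_simps = coord_def seven7 of_nat_numeral

lemma phi_expand: "phi u v w =
  u$1 * v$2 * w$3 - u$1 * v$3 * w$2 - u$2 * v$1 * w$3 + u$2 * v$3 * w$1 + u$3 * v$1 * w$2 - u$3 * v$2 * w$1
  - (u$1 * v$6 * w$0 - u$1 * v$0 * w$6 - u$6 * v$1 * w$0 + u$6 * v$0 * w$1 + u$0 * v$1 * w$6 - u$0 * v$6 * w$1)
  - (u$5 * v$2 * w$0 - u$5 * v$0 * w$2 - u$2 * v$5 * w$0 + u$2 * v$0 * w$5 + u$0 * v$5 * w$2 - u$0 * v$2 * w$5)
  - (u$5 * v$6 * w$3 - u$5 * v$3 * w$6 - u$6 * v$5 * w$3 + u$6 * v$3 * w$5 + u$3 * v$5 * w$6 - u$3 * v$6 * w$5)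
  - (u$4 * v$1 * w$5 - u$4 * v$5 * w$1 - u$1 * v$4 * w$5 + u$1 * v$5 * w$4 + u$5 * v$4 * w$1 - u$5 * v$1 * w$4)
  - (u$4 * v$2 * w$6 - u$4 * v$6 * w$2 - u$2 * v$4 * w$6 + u$2 * v$6 * w$4 + u$6 * v$4 * w$2 - u$6 * v$2 * w$4)
  - (u$4 * v$3 * w$0 - u$4 * v$0 * w$3 - u$3 * v$4 * w$0 + u$3 * v$0 * w$4 + u$0 * v$4 * w$3 - u$0 * v$3 * w$4)"
  unfolding phi_def Let_def ewedge3 by (simp add: coord_simps)

definition crossv :: "vec7 \<Rightarrow> vec7 \<Rightarrow> vec7" where
  "crossv u v = (\<chi> k. phi u v (axis k 1))"

lemma inner_crossv: "inner (crossv u v) w = phi u v w"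
  unfolding crossv_def inner_vec_def sum_7 phi_expand
  by (simp add: axis_def algebra_simps)

lemma cross7_eq: "cross7 u v = crossv u v"
  unfolding cross7_def
proof (rule the_equality)
  show "\<forall>w. inner (crossv u v) w = phi u v w" by (simp add: inner_crossv)
next
  fix z assume "\<forall>w. inner z w = phi u v w"
  then have "inner (z - crossv u v) w = 0" for w by (simp add: inner_diff_left inner_crossv)
  then show "z = crossv u v" by (metis eq_iff_diff_eq_0 inner_eq_zero_iff)
qed

lemma inner_cross7: "inner (cross7 u v) w = phi u v w"
  by (simp add: cross7_eq inner_crossv)

lemma crossv_nth: "crossv u v $ k = phi u v (axis k 1)"
  by (simp add: crossv_def)

lemma psi_identity: "psi u v a b = wedge2 u v a b - phi (cross7 u v) a b"
  unfolding psi_def Let_def ewedge4 wedge2_def cross7_eq phi_expand[of "crossv u v"] crossv_nth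
  unfolding phi_expand inner_vec_def sum_7
  by (simp add: coord_simps axis_def algebra_simps)

lemma cross_norm: "inner (cross7 u v) (cross7 u v) = inner u u * inner v v - (inner u v)^2"
  unfolding cross7_eq inner_vec_def sum_7 crossv_nth phi_expand
  by (simp add: axis_def algebra_simps power2_eq_square)

lemma phi_swap12: "phi v u w = - phi u v w"
  unfolding phi_expand by (simp add: algebra_simps)
lemma phi_swap23: "phi u w v = - phi u v w"
  unfolding phi_expand by (simp add: algebra_simps)
lemma phi_add1: "phi (x + y) a b = phi x a b + phi y a b"
  unfolding phi_expand by (simp add: algebra_simps)
lemma phi_scale1: "phi (c *\<^sub>R x) a b = c * phi x a b"
  unfolding phi_expand by (simp add: algebra_simps)
lemma phi_lin1: "linear (\<lambda>u. phi u a b)"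
  by (rule linearI) (simp_all add: phi_add1 phi_scale1)
lemma phi_diff1: "phi (x - y) a b = phi x a b - phi y a b"
  using linear_diff[OF phi_lin1] by simp
lemma phi_zero1: "phi 0 a b = 0"
  using linear_0[OF phi_lin1] by simp
lemma phi_sum1: "phi (\<Sum>i\<in>I. c i *\<^sub>R g i) a b = (\<Sum>i\<in>I. c i * phi (g i) a b)"
  using linear_sum[OF phi_lin1, of "\<lambda>i. c i *\<^sub>R g i" I] by (simp add: o_def phi_scale1)
lemma phi_rep12: "phi u u w = 0"
  using phi_swap12[of u u w] by simp
lemma phi_rep13: "phi u v u = 0"
  using phi_swap23[of u v u] phi_rep12[of u v] by simp

lemma cross_orth1: "inner (cross7 x y) x = 0"
  by (simp add: inner_cross7 phi_rep13)
lemma cross_orth2: "inner (cross7 x y) y = 0"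
  using phi_swap23[of x y y] by (simp add: inner_cross7)

lemma cross_zero_span:
  assumes "d \<noteq> 0" "cross7 d x = 0"
  shows "x \<in> span {d}"
proof -
  have h: "inner d d * inner x x - (inner d x)^2 = 0"
    using cross_norm[of d x] assms(2) by simp
  have "(norm d * norm x)^2 = inner d d * inner x x"
    by (simp only: power_mult_distrib power2_norm_eq_inner)
  with h have "(inner d x)^2 = (norm d * norm x)^2"
    by simp
  then have "sqrt ((inner d x)^2) = sqrt ((norm d * norm x)^2)" by simp
  then have "\<bar>inner d x\<bar> = norm d * norm x"
    by (simp only: real_sqrt_abs) simp
  then have "norm d *\<^sub>R x = norm x *\<^sub>R d \<or> norm d *\<^sub>R x = - norm x *\<^sub>R d"
    using norm_cauchy_schwarz_abs_eq by blast
  moreover have "norm d \<noteq> 0" using assms(1) by simp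
  moreover have "x = inverse (norm d) *\<^sub>R (norm d *\<^sub>R x)"
    using \<open>norm d \<noteq> 0\<close> by simp
  ultimately have "\<exists>t. x = t *\<^sub>R d"
  proof (elim disjE conjE)
    assume a: "norm d *\<^sub>R x = norm x *\<^sub>R d" and b: "x = inverse (norm d) *\<^sub>R (norm d *\<^sub>R x)"
    show ?thesis
      by (rule exI[of _ "inverse (norm d) * norm x"]) (subst b, simp only: a scaleR_scaleR)
  next
    assume a: "norm d *\<^sub>R x = - norm x *\<^sub>R d" and b: "x = inverse (norm d) *\<^sub>R (norm d *\<^sub>R x)"
    show ?thesis
      by (rule exI[of _ "- (inverse (norm d) * norm x)"]) (subst b, simp only: a scaleR_scaleR scaleR_minus_left scaleR_minus_right mult_minus_right)
  qed
  moreover have "d \<in> span {d}" by (simp add: span_base)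
  ultimately show ?thesis using span_mul by blast
qed

lemma phi_kernel:
  assumes "d \<noteq> 0" "\<forall>b. phi d x b = 0"
  shows "x \<in> span {d}"
proof -
  have "inner (cross7 d x) (cross7 d x) = 0"
    using assms(2) by (simp add: inner_cross7)
  then show ?thesis using cross_zero_span assms(1) by simp
qed


definition good :: "vec7 set \<Rightarrow> form2 \<Rightarrow> bool" where
  "good P \<alpha> \<longleftrightarrow> (\<forall>x y b. \<alpha> (x + y) b = \<alpha> x b + \<alpha> y b) \<and> (\<forall>c x b. \<alpha> (c *\<^sub>R x) b = c * \<alpha> x b)
     \<and> (\<forall>a b. \<alpha> a b = - \<alpha> b a) \<and> (\<forall>a\<in>orthogonal_comp P. \<forall>b. \<alpha> a b = 0)"

lemma good_wedge:
  assumes "u \<in> P" "v \<in> P"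
  shows "good P (wedge2 u v)"
  using assms unfolding good_def wedge2_def orthogonal_comp_def orthogonal_def
  by (auto simp: inner_add_right algebra_simps)

lemma good_props:
  assumes "good P \<alpha>"
  shows "\<alpha> (x + y) b = \<alpha> x b + \<alpha> y b" "\<alpha> (c *\<^sub>R x) b = c * \<alpha> x b" "\<alpha> a b = - \<alpha> b a"
    "a \<in> orthogonal_comp P \<Longrightarrow> \<alpha> a b = 0" "a \<in> orthogonal_comp P \<Longrightarrow> \<alpha> b a = 0"
    "\<alpha> b (x + y) = \<alpha> b x + \<alpha> b y" "\<alpha> b (c *\<^sub>R x) = c * \<alpha> b x" "\<alpha> x x = 0" "\<alpha> 0 b = 0" "\<alpha> b 0 = 0"
    "\<alpha> (x - y) b = \<alpha> x b - \<alpha> y b"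
proof -
  have G: "(\<forall>x y b. \<alpha> (x + y) b = \<alpha> x b + \<alpha> y b) \<and> (\<forall>c x b. \<alpha> (c *\<^sub>R x) b = c * \<alpha> x b)
     \<and> (\<forall>a b. \<alpha> a b = - \<alpha> b a) \<and> (\<forall>a\<in>orthogonal_comp P. \<forall>b. \<alpha> a b = 0)"
    using assms unfolding good_def .
  note A1 = conjunct1[OF G, rule_format]
  note A2 = conjunct1[OF conjunct2[OF G], rule_format]
  note S = conjunct1[OF conjunct2[OF conjunct2[OF G]], rule_format]
  note Z = conjunct2[OF conjunct2[OF conjunct2[OF G]], rule_format]
  show "\<alpha> (x + y) b = \<alpha> x b + \<alpha> y b" by (rule A1)
  show "\<alpha> (c *\<^sub>R x) b = c * \<alpha> x b" by (rule A2)
  show "\<alpha> a b = - \<alpha> b a" by (rule S)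
  show "a \<in> orthogonal_comp P \<Longrightarrow> \<alpha> a b = 0" by (rule Z)
  show "a \<in> orthogonal_comp P \<Longrightarrow> \<alpha> b a = 0" using S[of b a] Z[of a b] by linarith
  show "\<alpha> b (x + y) = \<alpha> b x + \<alpha> b y" using A1[of x y b] S[of b "x+y"] S[of b x] S[of b y] by linarith
  have "\<alpha> b (c *\<^sub>R x) = - (c * \<alpha> x b)" using A2[of c x b] S[of b "c *\<^sub>R x"] by linarith
  also have "\<alpha> x b = - \<alpha> b x" by (rule S)
  finally show "\<alpha> b (c *\<^sub>R x) = c * \<alpha> b x" by simp
  show "\<alpha> x x = 0" using S[of x x] by linarith
  have Z0: "\<alpha> 0 b = 0" for b using A2[of 0 0 b] by simp
  show "\<alpha> 0 b = 0" by (rule Z0)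
  show "\<alpha> b 0 = 0" using S[of b 0] Z0[of b] by linarith
  show "\<alpha> (x - y) b = \<alpha> x b - \<alpha> y b" using A1[of "x - y" y b] by simp
qed

lemma good_intro:
  assumes "\<And>x y b. \<alpha> (x + y) b = \<alpha> x b + \<alpha> y b" "\<And>c x b. \<alpha> (c *\<^sub>R x) b = c * \<alpha> x b"
    "\<And>a b. \<alpha> a b = - \<alpha> b a" "\<And>a b. a \<in> orthogonal_comp P \<Longrightarrow> \<alpha> a b = 0"
  shows "good P \<alpha>"
  unfolding good_def using assms by blast

lemma good_sum:
  assumes "finite I" "\<forall>i\<in>I. good P (g i)"
  shows "good P (\<lambda>a b. \<Sum>i\<in>I. c i * g i a b)"
proof (rule good_intro)
  have G: "\<And>i. i \<in> I \<Longrightarrow> good P (g i)" using assms(2) by blast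
  fix x y b
  have "(\<Sum>i\<in>I. c i * g i (x + y) b) = (\<Sum>i\<in>I. c i * g i x b + c i * g i y b)"
    by (rule sum.cong) (simp_all add: good_props(1)[OF G] distrib_left)
  then show "(\<Sum>i\<in>I. c i * g i (x + y) b) = (\<Sum>i\<in>I. c i * g i x b) + (\<Sum>i\<in>I. c i * g i y b)"
    by (simp only: sum.distrib)
next
  have G: "\<And>i. i \<in> I \<Longrightarrow> good P (g i)" using assms(2) by blast
  fix r x b
  have "(\<Sum>i\<in>I. c i * g i (r *\<^sub>R x) b) = (\<Sum>i\<in>I. r * (c i * g i x b))"
    by (rule sum.cong) (simp_all add: good_props(2)[OF G])
  then show "(\<Sum>i\<in>I. c i * g i (r *\<^sub>R x) b) = r * (\<Sum>i\<in>I. c i * g i x b)"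
    by (simp only: sum_distrib_left)
next
  have G: "\<And>i. i \<in> I \<Longrightarrow> good P (g i)" using assms(2) by blast
  fix a b
  have "(\<Sum>i\<in>I. c i * g i a b) = (\<Sum>i\<in>I. - (c i * g i b a))"
  proof (rule sum.cong)
    fix i assume "i \<in> I"
    from good_props(3)[OF G[OF this], of a b] show "c i * g i a b = - (c i * g i b a)" by simp
  qed simp
  then show "(\<Sum>i\<in>I. c i * g i a b) = - (\<Sum>i\<in>I. c i * g i b a)"
    by (simp only: sum_negf)
next
  have G: "\<And>i. i \<in> I \<Longrightarrow> good P (g i)" using assms(2) by blast
  fix a b assume "a \<in> orthogonal_comp P"
  then show "(\<Sum>i\<in>I. c i * g i a b) = 0"
    by (intro sum.neutral) (simp add: good_props(4)[OF G])
qed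

lemma good_add:
  assumes "good P \<alpha>" "good P \<beta>"
  shows "good P (\<lambda>a b. \<alpha> a b + \<beta> a b)"
proof (rule good_intro)
  fix x y b show "\<alpha> (x + y) b + \<beta> (x + y) b = \<alpha> x b + \<beta> x b + (\<alpha> y b + \<beta> y b)"
    using good_props(1)[OF assms(1), of x y b] good_props(1)[OF assms(2), of x y b] by linarith
next
  fix c x b show "\<alpha> (c *\<^sub>R x) b + \<beta> (c *\<^sub>R x) b = c * (\<alpha> x b + \<beta> x b)"
    using good_props(2)[OF assms(1), of c x b] good_props(2)[OF assms(2), of c x b] by (simp add: distrib_left)
next
  fix a b show "\<alpha> a b + \<beta> a b = - (\<alpha> b a + \<beta> b a)"
    using good_props(3)[OF assms(1), of a b] good_props(3)[OF assms(2), of a b] by linarith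
next
  fix a b assume "a \<in> orthogonal_comp P"
  then show "\<alpha> a b + \<beta> a b = 0" using good_props(4)[OF assms(1)] good_props(4)[OF assms(2)] by simp
qed

lemma good_sum2:
  assumes "good P \<alpha>" "finite I"
  shows "\<alpha> a (\<Sum>i\<in>I. c i *\<^sub>R g i) = (\<Sum>i\<in>I. c i * \<alpha> a (g i))"
  using assms(2) by (induction I rule: finite_induct) (simp_all add: good_props(6,7,10)[OF assms(1)])

lemma theta_decomp:
  assumes "associative P" "\<omega> \<in> Theta P"
  shows "\<exists>\<alpha> w. good P \<alpha> \<and> w \<in> P \<and> (\<forall>a b. \<omega> a b = \<alpha> a b + phi w a b)"
proof -
  have sP: "subspace P" and cl: "\<And>u v. u \<in> P \<Longrightarrow> v \<in> P \<Longrightarrow> cross7 u v \<in> P"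
    using assms(1) unfolding associative_def by auto
  obtain x y where om: "\<omega> = (\<lambda>a b. x a b + y a b)" and x: "x \<in> Lambda2_of P" and y: "y \<in> Psi_of P"
    using assms(2) unfolding Theta_def by auto
  obtain F c where F: "finite F" "F \<subseteq> {wedge2 u v | u v. u \<in> P \<and> v \<in> P}" and xe: "x = (\<lambda>a b. \<Sum>f\<in>F. c f * f a b)"
    using x unfolding Lambda2_of_def form_span_def by auto
  have gx: "good P x" unfolding xe
    by (rule good_sum[OF F(1)]) (use F(2) good_wedge in blast)
  obtain G d where G: "finite G" "G \<subseteq> {Psi2 u v | u v. u \<in> P \<and> v \<in> P}" and ye: "y = (\<lambda>a b. \<Sum>f\<in>G. d f * f a b)"
    using y unfolding Psi_of_def form_span_def by auto
  have "\<forall>g\<in>G. \<exists>u v. u \<in> P \<and> v \<in> P \<and> g = Psi2 u v" using G(2) by blast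
  then obtain U V where UV: "\<And>g. g \<in> G \<Longrightarrow> U g \<in> P \<and> V g \<in> P \<and> g = Psi2 (U g) (V g)"
    by metis
  define w where "w = (\<Sum>g\<in>G. (- d g) *\<^sub>R cross7 (U g) (V g))"
  define \<alpha> where "\<alpha> = (\<lambda>a b. x a b + (\<Sum>g\<in>G. d g * wedge2 (U g) (V g) a b))"
  have "w \<in> P" unfolding w_def
    by (rule subspace_sum[OF sP]) (simp add: subspace_scale[OF sP] subspace_neg[OF sP] cl UV)
  moreover have "good P \<alpha>" unfolding \<alpha>_def
    by (rule good_add[OF gx good_sum[OF G(1)]]) (simp add: UV good_wedge)
  moreover have "\<omega> a b = \<alpha> a b + phi w a b" for a b
  proof -
    have "y a b = (\<Sum>g\<in>G. d g * (wedge2 (U g) (V g) a b - phi (cross7 (U g) (V g)) a b))"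
      unfolding ye
    proof (rule sum.cong)
      fix g assume "g \<in> G"
      then have e: "g = Psi2 (U g) (V g)" using UV by blast
      have "g a b = Psi2 (U g) (V g) a b" by (subst e) (rule refl)
      then show "d g * g a b = d g * (wedge2 (U g) (V g) a b - phi (cross7 (U g) (V g)) a b)"
        by (simp add: Psi2_def psi_identity)
    qed simp
    also have "\<dots> = (\<Sum>g\<in>G. d g * wedge2 (U g) (V g) a b) + (\<Sum>g\<in>G. (- d g) * phi (cross7 (U g) (V g)) a b)"
      by (simp add: sum.distrib[symmetric] algebra_simps)
    also have "(\<Sum>g\<in>G. (- d g) * phi (cross7 (U g) (V g)) a b) = phi w a b"
      unfolding w_def phi_sum1 ..
    finally show ?thesis unfolding om \<alpha>_def by simp
  qed
  ultimately show ?thesis by blast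
qed


lemma kernel_vec:
  assumes sP: "subspace P" and d3: "dim P = 3" and g: "good P \<alpha>"
  shows "\<exists>k\<in>P. k \<noteq> 0 \<and> (\<forall>b. \<alpha> k b = 0)"
proof -
  obtain B where BP: "B \<subseteq> P" and po: "pairwise orthogonal B" and n1: "\<And>x. x \<in> B \<Longrightarrow> norm x = 1"
    and cB: "card B = dim P" and sB: "span B = P"
    using orthonormal_basis_subspace[OF sP] by metis
  obtain p1 p2 p3 where B3: "B = {p1,p2,p3}" and d12: "p1 \<noteq> p2" and d23: "p2 \<noteq> p3" and d13: "p1 \<noteq> p3"
    using cB d3 card_3_iff by metis
  have n: "inner p1 p1 = 1" "inner p2 p2 = 1" "inner p3 p3 = 1"
    using n1 B3 by (auto simp: norm_eq_1)
  have o: "inner p1 p2 = 0" "inner p1 p3 = 0" "inner p2 p3 = 0"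
          "inner p2 p1 = 0" "inner p3 p1 = 0" "inner p3 p2 = 0"
    using po B3 d12 d23 d13 unfolding pairwise_def orthogonal_def by auto
  have pP: "p1 \<in> P" "p2 \<in> P" "p3 \<in> P" using BP B3 by auto
  have proj: "\<alpha> k b = inner b p1 * \<alpha> k p1 + inner b p2 * \<alpha> k p2 + inner b p3 * \<alpha> k p3" for k b
  proof -
    define pb where "pb = inner b p1 *\<^sub>R p1 + inner b p2 *\<^sub>R p2 + inner b p3 *\<^sub>R p3"
    have "orthogonal (b - pb) y" if "y \<in> P" for y
    proof (rule orthogonal_to_span)
      show "y \<in> span B" using that sB by simp
      fix z assume "z \<in> B"
      then have "z = p1 \<or> z = p2 \<or> z = p3" using B3 by auto
      then show "orthogonal (b - pb) z"
        unfolding orthogonal_def pb_def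
        using inner_commute[of p1 b] inner_commute[of p2 b] inner_commute[of p3 b]
        by (auto simp: inner_diff_right inner_add_right inner_diff_left inner_add_left n o)
    qed
    then have r: "b - pb \<in> orthogonal_comp P"
      unfolding orthogonal_comp_def by (auto simp: orthogonal_commute)
    have "\<alpha> k b = \<alpha> k (pb + (b - pb))" by simp
    also have "\<dots> = \<alpha> k pb" using good_props(6)[OF g, of k pb "b - pb"] good_props(5)[OF g r, of k] by simp
    also have "\<dots> = inner b p1 * \<alpha> k p1 + inner b p2 * \<alpha> k p2 + inner b p3 * \<alpha> k p3"
      unfolding pb_def by (simp add: good_props(6,7)[OF g])
    finally show ?thesis .
  qed
  define a12 where "a12 = \<alpha> p1 p2"
  define a13 where "a13 = \<alpha> p1 p3"
  define a23 where "a23 = \<alpha> p2 p3"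
  have s: "\<alpha> p2 p1 = - a12" "\<alpha> p3 p1 = - a13" "\<alpha> p3 p2 = - a23"
    "\<alpha> p1 p1 = 0" "\<alpha> p2 p2 = 0" "\<alpha> p3 p3 = 0"
    unfolding a12_def a13_def a23_def
    using good_props(3)[OF g, of p2 p1] good_props(3)[OF g, of p3 p1] good_props(3)[OF g, of p3 p2]
      good_props(8)[OF g, of p1] good_props(8)[OF g, of p2] good_props(8)[OF g, of p3] by simp_all
  show ?thesis
  proof (cases "a12 = 0 \<and> a13 = 0 \<and> a23 = 0")
    case True
    have "p1 \<noteq> 0" using n by auto
    moreover have "\<alpha> p1 b = 0" for b
      using proj[of p1 b] True s unfolding a12_def a13_def by simp
    ultimately show ?thesis using pP by blast
  next
    case False
    define k where "k = a23 *\<^sub>R p1 - a13 *\<^sub>R p2 + a12 *\<^sub>R p3"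
    have "k \<in> P" unfolding k_def using pP sP
      by (simp add: subspace_add subspace_diff subspace_scale)
    moreover have "inner k p1 = a23" "inner k p2 = - a13" "inner k p3 = a12"
      unfolding k_def by (simp_all add: inner_diff_left inner_add_left n o)
    then have "k \<noteq> 0" using False by auto
    moreover have "\<alpha> k b = 0" for b
    proof -
      have kp: "\<alpha> k p = a23 * \<alpha> p1 p - a13 * \<alpha> p2 p + a12 * \<alpha> p3 p" for p
        unfolding k_def by (simp add: good_props(1,2,11)[OF g])
      have "\<alpha> k p1 = 0" "\<alpha> k p2 = 0" "\<alpha> k p3 = 0"
        using kp[of p1] kp[of p2] kp[of p3] s unfolding a12_def[symmetric] a13_def[symmetric] a23_def[symmetric]
        by (simp_all add: algebra_simps)
      then show ?thesis using proj[of k b] by simp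
    qed
    ultimately show ?thesis by blast
  qed
qed


lemma dim_UNIV7: "dim (UNIV :: vec7 set) = 7"
  by simp

lemma dim_perp:
  assumes "subspace (P :: vec7 set)"
  shows "dim (orthogonal_comp P) + dim P = 7"
proof -
  have "dim {y \<in> UNIV. \<forall>x \<in> P. orthogonal x y} + dim P = dim (UNIV :: vec7 set)"
    by (rule dim_subspace_orthogonal_to_vectors) (use assms in auto)
  moreover have "{y \<in> UNIV. \<forall>x \<in> P. orthogonal x y} = orthogonal_comp P"
    unfolding orthogonal_comp_def by auto
  ultimately show ?thesis by simp
qed

lemma ker_sub:
  assumes g: "good P \<alpha>"
  shows "subspace {x. \<forall>b. \<alpha> x b = 0}"
  unfolding subspace_def using good_props(1,2,9)[OF g] by auto

lemma ker_dim:
  assumes sP: "subspace P" and d3: "dim P = 3" and g: "good P \<alpha>"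
  shows "5 \<le> dim {x. \<forall>b. \<alpha> x b = 0}"
proof -
  obtain k where kP: "k \<in> P" and k0: "k \<noteq> 0" and kk: "\<forall>b. \<alpha> k b = 0"
    using kernel_vec[OF sP d3 g] by blast
  have sO: "subspace (orthogonal_comp P)" by (rule subspace_orthogonal_comp)
  have kn: "k \<notin> orthogonal_comp P"
  proof
    assume "k \<in> orthogonal_comp P"
    then have "orthogonal k k" using kP unfolding orthogonal_comp_def by auto
    then show False using k0 unfolding orthogonal_def by simp
  qed
  have spO: "span (orthogonal_comp P) = orthogonal_comp P" using sO by (simp add: span_eq_iff)
  have "k \<notin> span (orthogonal_comp P)" unfolding spO by (rule kn)
  then have "dim (insert k (orthogonal_comp P)) = dim (orthogonal_comp P) + 1"
    by (simp add: dim_insert)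
  also have "dim (orthogonal_comp P) = 4" using dim_perp[OF sP] d3 by simp
  finally have e: "dim (insert k (orthogonal_comp P)) = 5" by simp
  have "insert k (orthogonal_comp P) \<subseteq> {x. \<forall>b. \<alpha> x b = 0}"
    using kk good_props(4)[OF g] by auto
  then have "dim (insert k (orthogonal_comp P)) \<le> dim {x. \<forall>b. \<alpha> x b = 0}" by (rule dim_subset)
  then show ?thesis using e by simp
qed

theorem proposition4p12:
  fixes P Q :: "vec7 set"
  assumes "associative P" and "associative Q" and "P \<noteq> Q"
  shows "Theta P \<inter> Theta Q \<subseteq> Lambda27"
proof
  fix \<omega> assume om: "\<omega> \<in> Theta P \<inter> Theta Q"
  have sP: "subspace P" and dP: "dim P = 3" and clP: "\<And>u v. u \<in> P \<Longrightarrow> v \<in> P \<Longrightarrow> cross7 u v \<in> P"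
    using assms(1) unfolding associative_def by auto
  have sQ: "subspace Q" and dQ: "dim Q = 3" and clQ: "\<And>u v. u \<in> Q \<Longrightarrow> v \<in> Q \<Longrightarrow> cross7 u v \<in> Q"
    using assms(2) unfolding associative_def by auto
  obtain \<alpha> w where ga: "good P \<alpha>" and wP: "w \<in> P" and ea: "\<And>a b. \<omega> a b = \<alpha> a b + phi w a b"
    using theta_decomp[OF assms(1)] om by blast
  obtain \<beta> z where gb: "good Q \<beta>" and zQ: "z \<in> Q" and eb: "\<And>a b. \<omega> a b = \<beta> a b + phi z a b"
    using theta_decomp[OF assms(2)] om by blast
  define d where "d = z - w"
  have diff: "\<alpha> a b - \<beta> a b = phi d a b" for a b
    using ea[of a b] eb[of a b] unfolding d_def phi_diff1 by linarith
  define KA where "KA = {x. \<forall>b. \<alpha> x b = 0}"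
  define KB where "KB = {x. \<forall>b. \<beta> x b = 0}"
  have sKA: "subspace KA" unfolding KA_def by (rule ker_sub[OF ga])
  have sKB: "subspace KB" unfolding KB_def by (rule ker_sub[OF gb])
  have dKA: "5 \<le> dim KA" unfolding KA_def by (rule ker_dim[OF sP dP ga])
  have dKB: "5 \<le> dim KB" unfolding KB_def by (rule ker_dim[OF sQ dQ gb])
  have d0: "d = 0"
  proof (rule ccontr)
    assume dn: "d \<noteq> 0"
    have "KA \<inter> KB \<subseteq> span {d}"
    proof
      fix x assume "x \<in> KA \<inter> KB"
      then have xa: "\<alpha> x b = 0" and xb: "\<beta> x b = 0" for b unfolding KA_def KB_def by auto
      have "\<forall>b. phi d x b = 0"
      proof
        fix b show "phi d x b = 0" using diff[of x b] xa[of b] xb[of b] by simp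
      qed
      then show "x \<in> span {d}" using phi_kernel[OF dn] by blast
    qed
    then have "dim (KA \<inter> KB) \<le> dim (span {d})" by (rule dim_subset)
    then have i1: "dim (KA \<inter> KB) \<le> 1" using dn by simp
    have "dim {x + y |x y. x \<in> KA \<and> y \<in> KB} \<le> dim (UNIV :: vec7 set)" by (rule dim_subset) simp
    then have "dim {x + y |x y. x \<in> KA \<and> y \<in> KB} \<le> 7" by simp
    moreover have "dim {x + y |x y. x \<in> KA \<and> y \<in> KB} + dim (KA \<inter> KB) = dim KA + dim KB"
      by (rule dim_sums_Int[OF sKA sKB])
    ultimately show False using i1 dKA dKB by linarith
  qed
  have ab: "\<alpha> a b = \<beta> a b" for a b using diff[of a b] d0 phi_zero1 by simp
  have a0: "\<alpha> x y = 0" for x y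
  proof (rule ccontr)
    assume nz: "\<alpha> x y \<noteq> 0"
    define W where "W = orthogonal_comp KA"
    have "orthogonal_comp P \<subseteq> KA" unfolding KA_def using good_props(4)[OF ga] by auto
    then have "W \<subseteq> orthogonal_comp (orthogonal_comp P)" unfolding W_def by (rule orthogonal_comp_anti_mono)
    then have WP: "W \<subseteq> P" using orthogonal_comp_self[OF sP] by simp
    have "orthogonal_comp Q \<subseteq> KA" unfolding KA_def using good_props(4)[OF gb] ab by auto
    then have "W \<subseteq> orthogonal_comp (orthogonal_comp Q)" unfolding W_def by (rule orthogonal_comp_anti_mono)
    then have WQ: "W \<subseteq> Q" using orthogonal_comp_self[OF sQ] by simp
    have sW: "subspace W" unfolding W_def by (rule subspace_orthogonal_comp)
    have WK: "orthogonal_comp W = KA" unfolding W_def by (rule orthogonal_comp_self[OF sKA])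
    have dec: "\<exists>v1 v2. v = v1 + v2 \<and> v1 \<in> W \<and> v2 \<in> KA" for v
    proof -
      have "v \<in> W + orthogonal_comp W" using subspace_sum_orthogonal_comp[OF sW] by simp
      then show ?thesis using WK by (auto elim!: set_plus_elim)
    qed
    obtain x1 x2 where x12: "x = x1 + x2" "x1 \<in> W" "x2 \<in> KA" using dec by blast
    obtain y1 y2 where y12: "y = y1 + y2" "y1 \<in> W" "y2 \<in> KA" using dec by blast
    have "\<alpha> x y = \<alpha> x1 y" using x12 good_props(1)[OF ga, of x1 x2 y] unfolding KA_def by simp
    also have "\<dots> = \<alpha> x1 y1" using y12 good_props(6)[OF ga, of x1 y1 y2] good_props(3)[OF ga, of x1 y2]
      unfolding KA_def by simp
    finally have nz1: "\<alpha> x1 y1 \<noteq> 0" using nz by simp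
    have x1PQ: "x1 \<in> P" "x1 \<in> Q" using x12 WP WQ by auto
    have y1PQ: "y1 \<in> P" "y1 \<in> Q" using y12 WP WQ by auto
    define c where "c = cross7 x1 y1"
    have cPQ: "c \<in> P" "c \<in> Q" unfolding c_def using clP clQ x1PQ y1PQ by auto
    have x10: "x1 \<noteq> 0" using nz1 good_props(9)[OF ga] by auto
    have y1n: "y1 \<notin> span {x1}"
    proof
      assume "y1 \<in> span {x1}"
      then obtain t where "y1 = t *\<^sub>R x1" by (auto simp: span_singleton)
      then have "\<alpha> x1 y1 = 0" using good_props(7,8)[OF ga] by simp
      then show False using nz1 by simp
    qed
    have c0: "c \<noteq> 0"
    proof
      assume "c = 0"
      then have "y1 \<in> span {x1}" using cross_zero_span[OF x10] unfolding c_def by blast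
      then show False using y1n by simp
    qed
    have cn: "c \<notin> span {y1, x1}"
    proof
      assume cs: "c \<in> span {y1, x1}"
      have "orthogonal c c"
      proof (rule orthogonal_to_span[OF cs])
        fix v assume "v \<in> {y1, x1}"
        then show "orthogonal c v" unfolding c_def orthogonal_def using cross_orth1 cross_orth2 by auto
      qed
      then show False using c0 unfolding orthogonal_def by simp
    qed
    have "dim {c, y1, x1} = 3"
      using cn y1n x10 by (simp add: dim_insert)
    moreover have "{c, y1, x1} \<subseteq> P \<inter> Q" using cPQ x1PQ y1PQ by auto
    ultimately have "3 \<le> dim (P \<inter> Q)" using dim_subset[of "{c, y1, x1}" "P \<inter> Q"] by simp
    have sPQ: "subspace (P \<inter> Q)" using sP sQ by (rule subspace_inter)
    have "P \<inter> Q = P" by (rule subspace_dim_equal[OF sPQ sP]) (use \<open>3 \<le> dim (P \<inter> Q)\<close> dP in auto)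
    moreover have "P \<inter> Q = Q" by (rule subspace_dim_equal[OF sPQ sQ]) (use \<open>3 \<le> dim (P \<inter> Q)\<close> dQ in auto)
    ultimately show False using assms(3) by simp
  qed
  have "\<omega> = contr_phi w"
    unfolding contr_phi_def using ea a0 by (intro ext) simp
  then show "\<omega> \<in> Lambda27" unfolding Lambda27_def by blast
qed

end
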